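(* Let $s$ be an aperiodic standard episturmian word over a finite alphabet, and let $k$ be the number of distinct letters occurring in $s$. Then there exists a coloring $c:\mathcal F^+ s\to\{0,1,\ldots,k\}$ of the non-empty factors of $s$ such that for every factorization $s=V_1V_2\cdots V_n\cdots$ of $s$ into non-empty factors $V_i$, there exist integers $i,j$ with $c(V_i)\neq c(V_j)$. (For instance, writing the letters of $s$ as $a_1,\ldots,a_k$: $c(V)=0$ if $V$ is not a prefix of $s$, and $c(V)=m$ if $V$ is a prefix of $s$ ending in $a_m$.)
   Context: An infinite word $s$ over a finite alphabet $A$ is standard episturmian if its set of factors is closed under reversal and every left special factor of $s$ is a prefix of $s$; here a factor $u$ is left special if there are distinct letters $x,y\in A$ with $xu$ and $yu$ both factors of $s$. Aperiodic means not ultimately periodic. $\mathcal F^+ s$ denotes the set of non-empty factors of $s$. *)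

theory Defs
  imports Main
begin

text \<open>Infinite words are functions nat => 'a; finite words are lists.\<close>

definition factor :: "(nat \<Rightarrow> 'a) \<Rightarrow> 'a list \<Rightarrow> bool" where
  "factor s u \<longleftrightarrow> (\<exists>i. u = map s [i..<i + length u])"

definition is_prefix :: "(nat \<Rightarrow> 'a) \<Rightarrow> 'a list \<Rightarrow> bool" where
  "is_prefix s u \<longleftrightarrow> u = map s [0..<length u]"

definition left_special :: "(nat \<Rightarrow> 'a) \<Rightarrow> 'a list \<Rightarrow> bool" where
  "left_special s u \<longleftrightarrow> (\<exists>x y. x \<noteq> y \<and> factor s (x # u) \<and> factor s (y # u))"

definition standard_episturmian :: "(nat \<Rightarrow> 'a) \<Rightarrow> bool" where
  "standard_episturmian s \<longleftrightarrow>
     (\<forall>u. factor s u \<longrightarrow> factor s (rev u)) \<and>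
     (\<forall>u. left_special s u \<longrightarrow> is_prefix s u)"

definition ultimately_periodic :: "(nat \<Rightarrow> 'a) \<Rightarrow> bool" where
  "ultimately_periodic s \<longleftrightarrow> (\<exists>p>0. \<exists>N. \<forall>n\<ge>N. s (n + p) = s n)"

definition factorization :: "(nat \<Rightarrow> 'a) \<Rightarrow> (nat \<Rightarrow> 'a list) \<Rightarrow> bool" where
  "factorization s V \<longleftrightarrow>
     (\<forall>n. V n \<noteq> []) \<and>
     (\<forall>n j. j < length (V n) \<longrightarrow> s ((\<Sum>m<n. length (V m)) + j) = V n ! j)"

end

theory Submission
  imports Defs
begin

lemma factor_intro:
  assumes "\<And>k. k < length u \<Longrightarrow> s (i + k) = u ! k"
  shows "factor s u"
  unfolding factor_def
  by (rule exI[of _ i], rule nth_equalityI) (auto simp: assms)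

lemma prefix_nth:
  assumes "is_prefix s u" "k < length u"
  shows "u ! k = s k"
  using assms unfolding is_prefix_def
  by (metis add_0 diff_zero nth_map_upt)

lemma rs:
  assumes refl: "\<forall>u. factor s u \<longrightarrow> factor s (rev u)"
    and LS: "\<forall>u. left_special s u \<longrightarrow> is_prefix s u"
    and ag: "\<And>k. k < m \<Longrightarrow> s (i + k) = s (j + k)"
    and ne: "s (i + m) \<noteq> s (j + m)"
  shows "\<forall>k<m. s k = s (i + (m - 1 - k))"
proof -
  define u where "u = map (\<lambda>k. s (i + k)) [0..<m]"
  have lu: "length u = m" by (simp add: u_def)
  have f1: "factor s (u @ [s (i + m)])"
    by (rule factor_intro[of _ s i]) (auto simp: u_def nth_append less_Suc_eq)
  have f2: "factor s (u @ [s (j + m)])"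
    by (rule factor_intro[of _ s j]) (auto simp: u_def nth_append ag less_Suc_eq)
  have "factor s (rev (u @ [s (i + m)]))" "factor s (rev (u @ [s (j + m)]))"
    using refl f1 f2 by blast+
  hence "left_special s (rev u)"
    unfolding left_special_def using ne by auto
  hence p: "is_prefix s (rev u)" using LS by blast
  show ?thesis
  proof (intro allI impI)
    fix k assume k: "k < m"
    have "rev u ! k = s k" using prefix_nth[OF p] k lu by simp
    moreover have "rev u ! k = u ! (m - 1 - k)" using k lu by (simp add: rev_nth)
    moreover have "u ! (m - 1 - k) = s (i + (m - 1 - k))" using k by (simp add: u_def)
    ultimately show "s k = s (i + (m - 1 - k))" by simp
  qed
qed

lemma no_mono:
  assumes refl: "\<forall>u. factor s u \<longrightarrow> factor s (rev u)"
    and LS: "\<forall>u. left_special s u \<longrightarrow> is_prefix s u"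
    and np: "\<not> ultimately_periodic s"
    and fac: "factorization s V"
    and pre: "\<forall>i. is_prefix s (V i)"
    and la: "\<forall>i. last (V i) = a"
  shows False
proof -
  define L where "L j = length (V j)" for j
  define p where "p j = (\<Sum>m<j. length (V m))" for j
  have Lpos: "L j > 0" for j using fac unfolding factorization_def L_def by auto
  have pS: "p (Suc j) = p j + L j" for j by (simp add: p_def L_def)
  have sV: "s (p j + k) = s k" if "k < L j" for j k
  proof -
    have "s (p j + k) = V j ! k" using fac that unfolding factorization_def p_def L_def by auto
    also have "\<dots> = s k" using prefix_nth[OF pre[rule_format] that[unfolded L_def]] .
    finally show ?thesis .
  qed
  have sLa: "s (L j - 1) = a" for j
  proof -
    have "last (V j) = V j ! (L j - 1)" using Lpos[of j] unfolding L_def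
      by (simp add: last_conv_nth)
    also have "\<dots> = s (L j - 1)" using prefix_nth[OF pre[rule_format, of j], of "L j - 1"] Lpos[of j]
      unfolding L_def by simp
    finally show ?thesis using la by simp
  qed
  have sPa: "s (p (Suc j) - 1) = a" for j
    using sV[of "L j - 1" j] Lpos[of j] sLa[of j] by (simp add: pS)
  define A where "A k \<longleftrightarrow> (\<forall>j\<ge>1. s (p j + k) = s (p 1 + k))" for k
  have allA: "\<forall>k. A k"
  proof (rule ccontr)
    assume "\<not> (\<forall>k. A k)"
    then obtain k0 where "\<not> A k0" by blast
    define m where "m = (LEAST k. \<not> A k)"
    have nAm: "\<not> A m" unfolding m_def by (rule LeastI[of _ k0]) fact
    have Ak: "A k" if "k < m" for k using not_less_Least[of k "\<lambda>k. \<not> A k"] that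
      unfolding m_def by blast
    obtain j0 where j0: "j0 \<ge> 1" "s (p j0 + m) \<noteq> s (p 1 + m)"
      using nAm unfolding A_def by blast
    have R: "\<forall>k<m. s k = s (p 1 + (m - 1 - k))"
    proof (rule rs[OF refl LS, of m "p 1" "p j0"])
      fix k assume "k < m"
      thus "s (p 1 + k) = s (p j0 + k)" using Ak[of k, unfolded A_def, rule_format, of j0] j0(1) by simp
    next
      show "s (p 1 + m) \<noteq> s (p j0 + m)" using j0(2) by simp
    qed
    have val: "s (p j + m) = (if L j \<le> m then a else s m)" if "j \<ge> 1" for j
    proof (cases "L j \<le> m")
      case True
      have "s (p j + m) = s (p (Suc j) + (m - L j))" using True by (simp add: pS)
      also have "\<dots> = s (p 1 + (m - L j))"
        using Ak[of "m - L j", unfolded A_def, rule_format, of "Suc j"] Lpos[of j] True by simp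
      also have "\<dots> = s (L j - 1)" using R[rule_format, of "L j - 1"] Lpos[of j] True
        by (simp add: Suc_leI)
      finally show ?thesis using True sLa by simp
    next
      case False
      then show ?thesis using sV[of m j] by simp
    qed
    have v1: "s (p 1 + m) = (if L 1 \<le> m then a else s m)" using val by simp
    have v0: "s (p j0 + m) = (if L j0 \<le> m then a else s m)" using val j0 by simp
    obtain j1 j2 where j12: "j1 \<ge> 1" "j2 \<ge> 1" "L j1 \<le> m" "\<not> L j2 \<le> m" "s m \<noteq> a"
    proof (cases "L 1 \<le> m")
      case True
      hence "s (p j0 + m) \<noteq> a" using v1 j0(2) by simp
      hence "\<not> L j0 \<le> m" "s m \<noteq> a" using v0 by (auto split: if_splits)
      thus ?thesis using that[of 1 j0] True j0(1) by simp
    next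
      case False
      hence "s (p j0 + m) \<noteq> s m" using v1 j0(2) by simp
      hence "L j0 \<le> m" "s m \<noteq> a" using v0 by (auto split: if_splits)
      thus ?thesis using that[of j0 1] False j0(1) by simp
    qed
    have j1a: "s (p j1 + m) = a" using val[OF j12(1)] j12 by simp
    have j2a: "s (p j2 + m) = s m" using val[OF j12(2)] j12 by simp
    obtain i1 where i1: "j1 = Suc i1" using j12(1) by (cases j1) auto
    obtain i2 where i2: "j2 = Suc i2" using j12(2) by (cases j2) auto
    have pp1: "p j1 \<ge> 1" using Lpos[of i1] by (simp add: i1 pS)
    have pp2: "p j2 \<ge> 1" using Lpos[of i2] by (simp add: i2 pS)
    have ag: "s (p j1 - 1 + k) = s (p j2 - 1 + k)" if "k < Suc m" for k
    proof (cases k)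
      case 0 then show ?thesis using sPa[of i1] sPa[of i2] i1 i2 by simp
    next
      case (Suc k')
      have "s (p j1 - 1 + k) = s (p j1 + k')" using pp1 Suc by simp
      also have "\<dots> = s (p 1 + k')" using Ak[of k', unfolded A_def, rule_format, of j1] j12(1) Suc that by simp
      also have "\<dots> = s (p j2 + k')" using Ak[of k', unfolded A_def, rule_format, of j2] j12(2) Suc that by simp
      also have "\<dots> = s (p j2 - 1 + k)" using pp2 Suc by simp
      finally show ?thesis .
    qed
    have ne: "s (p j1 - 1 + Suc m) \<noteq> s (p j2 - 1 + Suc m)"
      using j1a j2a j12(5) pp1 pp2 by simp
    have "\<forall>k<Suc m. s k = s (p j1 - 1 + (Suc m - 1 - k))"
      by (rule rs[OF refl LS, of "Suc m" "p j1 - 1" "p j2 - 1"]) (use ag ne in auto)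
    hence "s m = s (p j1 - 1 + (Suc m - 1 - m))" by blast
    hence "s m = s (p j1 - 1)" by simp
    also have "\<dots> = a" using sPa[of i1] i1 by simp
    finally show False using j12(5) by simp
  qed
  have "p 2 = p 1 + L 1" using pS[of 1] by (simp add: numeral_2_eq_2)
  hence lt: "p 1 < p 2" using Lpos[of 1] by simp
  have per: "s (n + (p 2 - p 1)) = s n" if n: "n \<ge> p 1" for n
  proof -
    have "s (n + (p 2 - p 1)) = s (p 2 + (n - p 1))" using n lt by (simp add: algebra_simps)
    also have "\<dots> = s (p 1 + (n - p 1))" using allA[rule_format, of "n - p 1", unfolded A_def, rule_format, of 2] by simp
    also have "\<dots> = s n" using n by simp
    finally show ?thesis .
  qed
  have "ultimately_periodic s"
    unfolding ultimately_periodic_def using per lt by (intro exI[of _ "p 2 - p 1"]) auto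
  thus False using np by simp
qed

theorem mainTheorem10:
  fixes s :: "nat \<Rightarrow> 'a"
  assumes "finite (range s)"
    and "standard_episturmian s"
    and "\<not> ultimately_periodic s"
  shows "\<exists>c :: 'a list \<Rightarrow> nat.
           (\<forall>u. u \<noteq> [] \<and> factor s u \<longrightarrow> c u \<le> card (range s)) \<and>
           (\<forall>V. factorization s V \<longrightarrow> (\<exists>i j. c (V i) \<noteq> c (V j)))"
proof -
  define M where "M = range s"
  obtain h where h: "bij_betw h {0..<card M} M"
    using ex_bij_betw_nat_finite[of M] assms(1) M_def by blast
  define g where "g = inv_into {0..<card M} h"
  have g: "bij_betw g M {0..<card M}" unfolding g_def by (rule bij_betw_inv_into[OF h])
  define c where "c u = (if is_prefix s u \<and> u \<noteq> [] then Suc (g (last u)) else 0)" for u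
  have lastM: "last u \<in> M" if H: "u \<noteq> []" "factor s u" for u
  proof -
    obtain i where e: "u = map s [i..<i + length u]" using H(2) unfolding factor_def by blast
    define n where "n = length u"
    have npos: "n > 0" using H(1) by (simp add: n_def)
    have e2: "u ! (n - 1) = map s [i..<i + n] ! (n - 1)"
      by (rule arg_cong[OF e[folded n_def]])
    have "last u = u ! (n - 1)" using H(1) by (simp add: n_def last_conv_nth)
    also have "\<dots> = s (i + (n - 1))" using e2 npos by simp
    finally have "last u = s (i + (n - 1))" .
    thus ?thesis unfolding M_def by simp
  qed
  have bound: "\<forall>u. u \<noteq> [] \<and> factor s u \<longrightarrow> c u \<le> card (range s)"
  proof (intro allI impI)
    fix u assume u: "u \<noteq> [] \<and> factor s u"
    have "g (last u) < card M" using g lastM u unfolding bij_betw_def by auto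
    thus "c u \<le> card (range s)" unfolding c_def M_def by auto
  qed
  have nm: "\<exists>i j. c (V i) \<noteq> c (V j)" if fac: "factorization s V" for V
  proof (rule ccontr)
    assume "\<not> (\<exists>i j. c (V i) \<noteq> c (V j))"
    hence eq: "c (V i) = c (V 0)" for i by blast
    have ne: "V i \<noteq> []" for i using fac unfolding factorization_def by auto
    have f0: "s j = V 0 ! j" if "j < length (V 0)" for j
    proof -
      have "s ((\<Sum>m<0. length (V m)) + j) = V 0 ! j" using fac that unfolding factorization_def by blast
      thus ?thesis by simp
    qed
    have p0: "is_prefix s (V 0)"
      unfolding is_prefix_def
      by (rule nth_equalityI) (auto simp: f0)
    have c0: "c (V 0) = Suc (g (last (V 0)))" using p0 ne unfolding c_def by simp
    have pre: "is_prefix s (V i)" for i using eq[of i] c0 unfolding c_def by (auto split: if_splits)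
    have lmem: "last (V i) \<in> M" for i
    proof -
      have "last (V i) = V i ! (length (V i) - 1)" using ne[of i] by (simp add: last_conv_nth)
      also have "\<dots> = s (length (V i) - 1)" using prefix_nth[OF pre[of i], of "length (V i) - 1"] ne[of i]
        by simp
      finally show ?thesis unfolding M_def by simp
    qed
    have "g (last (V i)) = g (last (V 0))" for i using eq[of i] c0 pre[of i] ne[of i] unfolding c_def by simp
    hence la: "last (V i) = last (V 0)" for i
      using g lmem unfolding bij_betw_def inj_on_def by blast
    show False
      by (rule no_mono[of s V "last (V 0)"])
        (use assms(2,3) fac pre la in \<open>auto simp: standard_episturmian_def\<close>)
  qed
  show ?thesis using bound nm by blast
qed

end
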